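(* Let $(\vec s_i)_{i\in\mathbb N}$ be a strictly increasing sequence of oriented separations of a graph $G$ and $(P_i)_{i\in\mathbb N}$ a sequence of pre-tangles in $G$ satisfying (IM1) $\overleftarrow{s}_i\in P_i$ and $\vec s_i\in P_{i+1}$ for all $i$, and (IM2) for all $i<j$, every separation of minimal order among $s_i,\dots,s_{j-1}$ efficiently distinguishes $P_i$ and $P_j$. If $(|s_i|)_{i}$ cofinitely exceeds every integer, then there is a strictly increasing function $j:\mathbb N\to\mathbb N$ such that $(|s_{j(i)}|)_{i}$ is strictly increasing and the sequences $(\vec s_{j(i)})_{i}$ and $(P_{j(i)})_{i}$ still satisfy (IM1) and (IM2).
   Context: Notation: $s$ denotes a separation (an unordered pair $\{A,B\}$ of subsets of $V(G)$ with $A\cup B=V(G)$ and no edge between $A\setminus B$ and $B\setminus A$; order $|s|=|A\cap B|$), $\vec s,\overleftarrow{s}$ its two orientations; oriented separations are ordered by $(A,B)\le(C,D)$ iff $A\subseteq C$ and $B\supseteq D$. A set $O$ of oriented separations is consistent if there are no $(A,B),(C,D)\in O$ with $\{A,B\}\ne\{C,D\}$ and $(B,A)\le(C,D)$. A pre-tangle is a consistent set $P$ which, for some $k\in\mathbb N\cup\{\aleph_0\}$, contains exactly one orientation of every separation of order $<k$ and nothing else. A separation distinguishes two pre-tangles if both contain an orientation of it but different ones; efficiently if of minimum order among such. A sequence $(a_i)$ of integers cofinitely exceeds every integer if for every $k\in\mathbb N$ there is $I$ with $a_i\ge k$ for all $i\ge I$. *)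

theory Defs
  imports Main "HOL-Library.Extended_Nat"
begin

definition graph :: "'a set \<Rightarrow> 'a set set \<Rightarrow> bool" where
  "graph V E \<longleftrightarrow> (\<forall>e\<in>E. \<exists>u v. e = {u, v} \<and> u \<noteq> v \<and> u \<in> V \<and> v \<in> V)"

type_synonym 'a osep = "'a set \<times> 'a set"

definition is_sep :: "'a set \<Rightarrow> 'a set set \<Rightarrow> 'a osep \<Rightarrow> bool" where
  "is_sep V E s \<longleftrightarrow> (case s of (A, B) \<Rightarrow>
     A \<union> B = V \<and> (\<forall>x\<in>A - B. \<forall>y\<in>B - A. {x, y} \<notin> E))"

definition inv_sep :: "'a osep \<Rightarrow> 'a osep" where
  "inv_sep s = (case s of (A, B) \<Rightarrow> (B, A))"

definition sep_order :: "'a osep \<Rightarrow> enat" where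
  "sep_order s = (case s of (A, B) \<Rightarrow>
     (if finite (A \<inter> B) then enat (card (A \<inter> B)) else \<infinity>))"

definition sep_le :: "'a osep \<Rightarrow> 'a osep \<Rightarrow> bool" where
  "sep_le s t = (case s of (A, B) \<Rightarrow> case t of (C, D) \<Rightarrow> A \<subseteq> C \<and> D \<subseteq> B)"

definition sep_less :: "'a osep \<Rightarrow> 'a osep \<Rightarrow> bool" where
  "sep_less s t \<longleftrightarrow> sep_le s t \<and> s \<noteq> t"

definition consistent :: "'a osep set \<Rightarrow> bool" where
  "consistent Os \<longleftrightarrow> \<not> (\<exists>A B C D. (A, B) \<in> Os \<and> (C, D) \<in> Os \<and> {A, B} \<noteq> {C, D}
       \<and> sep_le (B, A) (C, D))"

text \<open>Pre-tangle of G: consistent, and for some k \<in> \<nat> \<union> {\<aleph>0} (an enat) contains exactly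
  one orientation of every separation of order < k and nothing else.\<close>
definition pre_tangle :: "'a set \<Rightarrow> 'a set set \<Rightarrow> 'a osep set \<Rightarrow> bool" where
  "pre_tangle V E P \<longleftrightarrow> consistent P \<and> (\<exists>k::enat.
     (\<forall>s\<in>P. is_sep V E s \<and> sep_order s < k) \<and>
     (\<forall>s. is_sep V E s \<and> sep_order s < k \<longrightarrow>
          (s \<in> P \<or> inv_sep s \<in> P) \<and> (s \<in> P \<and> inv_sep s \<in> P \<longrightarrow> s = inv_sep s)))"

definition distinguishes :: "'a osep \<Rightarrow> 'a osep set \<Rightarrow> 'a osep set \<Rightarrow> bool" where
  "distinguishes s P Q \<longleftrightarrow> (\<exists>x\<in>P. \<exists>y\<in>Q. x \<in> {s, inv_sep s} \<and> y \<in> {s, inv_sep s} \<and> x \<noteq> y)"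

definition eff_distinguishes :: "'a set \<Rightarrow> 'a set set \<Rightarrow> 'a osep \<Rightarrow> 'a osep set \<Rightarrow> 'a osep set \<Rightarrow> bool" where
  "eff_distinguishes V E s P Q \<longleftrightarrow> is_sep V E s \<and> distinguishes s P Q \<and>
     (\<forall>t. is_sep V E t \<and> distinguishes t P Q \<longrightarrow> sep_order s \<le> sep_order t)"

definition IM1 :: "(nat \<Rightarrow> 'a osep) \<Rightarrow> (nat \<Rightarrow> 'a osep set) \<Rightarrow> bool" where
  "IM1 s P \<longleftrightarrow> (\<forall>i. inv_sep (s i) \<in> P i \<and> s i \<in> P (Suc i))"

definition IM2 :: "'a set \<Rightarrow> 'a set set \<Rightarrow> (nat \<Rightarrow> 'a osep) \<Rightarrow> (nat \<Rightarrow> 'a osep set) \<Rightarrow> bool" where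
  "IM2 V E s P \<longleftrightarrow> (\<forall>i j. i < j \<longrightarrow> (\<forall>k. i \<le> k \<and> k < j \<and>
     (\<forall>l. i \<le> l \<and> l < j \<longrightarrow> sep_order (s k) \<le> sep_order (s l)) \<longrightarrow>
       eff_distinguishes V E (s k) (P i) (P j)))"

end

theory Submission
  imports Defs "HOL-Library.Infinite_Set"
begin

lemma sep_order_inv: "sep_order (inv_sep x) = sep_order x"
  by (cases x) (simp add: sep_order_def inv_sep_def Int_commute)

theorem mainTheorem16:
  fixes V :: "'a set" and E :: "'a set set"
    and s :: "nat \<Rightarrow> 'a set \<times> 'a set" and P :: "nat \<Rightarrow> ('a set \<times> 'a set) set"
  assumes "graph V E"
    and "\<forall>i. is_sep V E (s i)"
    and "\<forall>i j. i < j \<longrightarrow> sep_less (s i) (s j)"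
    and "\<forall>i. pre_tangle V E (P i)"
    and "IM1 s P"
    and "IM2 V E s P"
    and "\<forall>k::nat. \<exists>I. \<forall>i\<ge>I. enat k \<le> sep_order (s i)"
  shows "\<exists>j::nat \<Rightarrow> nat. strict_mono j \<and> strict_mono (\<lambda>i. sep_order (s (j i)))
           \<and> IM1 (\<lambda>i. s (j i)) (\<lambda>i. P (j i)) \<and> IM2 V E (\<lambda>i. s (j i)) (\<lambda>i. P (j i))"
proof -
  have fin: "sep_order (s n) \<noteq> \<infinity>" for n
  proof -
    have "s n \<in> P (Suc n)" using assms(5) by (simp add: IM1_def)
    moreover obtain k where "\<forall>x\<in>P (Suc n). is_sep V E x \<and> sep_order x < k"
      using assms(4) unfolding pre_tangle_def by blast
    ultimately have "sep_order (s n) < k" by blast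
    thus ?thesis by (metis enat_ord_simps(6))
  qed
  define o' where "o' n = the_enat (sep_order (s n))" for n
  have oe: "sep_order (s n) = enat (o' n)" for n
    using fin[of n] unfolding o'_def by (cases "sep_order (s n)") auto
  have tail: "\<forall>k::nat. \<exists>I. \<forall>i\<ge>I. k \<le> o' i" using assms(7) by (simp add: oe)
  define R where "R = {n. \<forall>l>n. o' n < o' l}"
  have ex: "\<exists>n\<ge>N. n \<in> R" for N
  proof -
    define v where "v = (LEAST v. \<exists>l\<ge>N. o' l = v)"
    have v1: "\<exists>l\<ge>N. o' l = v" unfolding v_def by (rule LeastI_ex) blast
    have v2: "l \<ge> N \<Longrightarrow> v \<le> o' l" for l unfolding v_def by (rule Least_le) blast
    define S where "S = {l. l \<ge> N \<and> o' l = v}"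
    obtain I where I: "\<forall>i\<ge>I. v + 1 \<le> o' i" using tail by blast
    have "S \<subseteq> {..<I}" using I unfolding S_def by (auto simp: not_less[symmetric])
    hence finS: "finite S" by (rule finite_subset) simp
    have neS: "S \<noteq> {}" using v1 unfolding S_def by blast
    define n where "n = Max S"
    have nS: "n \<in> S" unfolding n_def using finS neS by simp
    have "n \<in> R"
      unfolding R_def
    proof (intro CollectI allI impI)
      fix l assume "n < l"
      have "N \<le> n" using nS unfolding S_def by simp
      with \<open>n < l\<close> have lN: "l \<ge> N" by simp
      have "l \<notin> S" using Max_ge[OF finS, of l] \<open>n < l\<close> unfolding n_def by auto
      hence "o' l \<noteq> v" using lN unfolding S_def by blast
      moreover have "v \<le> o' l" using v2 lN by blast
      moreover have "o' n = v" using nS unfolding S_def by blast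
      ultimately show "o' n < o' l" by simp
    qed
    thus ?thesis using nS unfolding S_def by blast
  qed
  have infR: "infinite R" unfolding infinite_nat_iff_unbounded_le using ex by blast
  define j where "j = enumerate R"
  have jR: "j i \<in> R" for i unfolding j_def using enumerate_in_set[OF infR] .
  have smj: "strict_mono j" unfolding j_def strict_mono_def using enumerate_mono infR by blast
  have rec: "j i < l \<Longrightarrow> o' (j i) < o' l" for i l
    proof -
      assume "j i < l"
      moreover have "\<forall>l>j i. o' (j i) < o' l" using jR[of i] unfolding R_def by simp
      ultimately show ?thesis by blast
    qed
  have so: "strict_mono (\<lambda>i. sep_order (s (j i)))"
  proof (rule strict_monoI)
    fix a b :: nat assume "a < b"
    hence "j a < j b" using smj by (simp add: strict_monoD)
    hence "o' (j a) < o' (j b)" by (rule rec)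
    thus "sep_order (s (j a)) < sep_order (s (j b))" by (simp add: oe)
  qed
  have IM2j: "IM2 V E (\<lambda>i. s (j i)) (\<lambda>i. P (j i))"
    unfolding IM2_def
  proof (intro allI impI)
    fix a b k
    assume ab: "a < b" and k: "a \<le> k \<and> k < b \<and>
      (\<forall>l. a \<le> l \<and> l < b \<longrightarrow> sep_order (s (j k)) \<le> sep_order (s (j l)))"
    have "k = a"
    proof (rule ccontr)
      assume "k \<noteq> a" hence "a < k" using k by simp
      hence "sep_order (s (j a)) < sep_order (s (j k))" using so strict_monoD by blast
      moreover have "sep_order (s (j k)) \<le> sep_order (s (j a))" using k ab by simp
      ultimately show False by simp
    qed
    have jab: "j a < j b" using smj ab strict_monoD by blast
    have "\<forall>l. j a \<le> l \<and> l < j b \<longrightarrow> sep_order (s (j a)) \<le> sep_order (s l)"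
      using rec[of a] by (metis enat_ord_simps(1) le_less oe)
    hence "j a \<le> j a \<and> j a < j b \<and> (\<forall>l. j a \<le> l \<and> l < j b \<longrightarrow> sep_order (s (j a)) \<le> sep_order (s l))"
      using jab by simp
    moreover have "\<forall>kk. j a \<le> kk \<and> kk < j b \<and> (\<forall>l. j a \<le> l \<and> l < j b \<longrightarrow> sep_order (s kk) \<le> sep_order (s l)) \<longrightarrow>
       eff_distinguishes V E (s kk) (P (j a)) (P (j b))"
      using assms(6) jab unfolding IM2_def by simp
    ultimately show "eff_distinguishes V E (s (j k)) (P (j a)) (P (j b))"
      using \<open>k = a\<close> by simp
  qed
  have IM1j: "IM1 (\<lambda>i. s (j i)) (\<lambda>i. P (j i))"
    unfolding IM1_def
  proof (intro allI conjI)
    fix i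
    show inv: "inv_sep (s (j i)) \<in> P (j i)" using assms(5) by (simp add: IM1_def)
    have "i < Suc i" by simp
    hence "eff_distinguishes V E (s (j i)) (P (j i)) (P (j (Suc i)))"
    proof -
      have c: "\<forall>l. i \<le> l \<and> l < Suc i \<longrightarrow> sep_order (s (j i)) \<le> sep_order (s (j l))"
        using le_antisym less_Suc_eq_le by auto
      have "\<forall>k. i \<le> k \<and> k < Suc i \<and> (\<forall>l. i \<le> l \<and> l < Suc i \<longrightarrow> sep_order (s (j k)) \<le> sep_order (s (j l))) \<longrightarrow>
        eff_distinguishes V E (s (j k)) (P (j i)) (P (j (Suc i)))"
        using IM2j unfolding IM2_def by blast
      thus ?thesis using c by blast
    qed
    then obtain x y where xy: "x \<in> P (j i)" "y \<in> P (j (Suc i))"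
      "x \<in> {s (j i), inv_sep (s (j i))}" "y \<in> {s (j i), inv_sep (s (j i))}" "x \<noteq> y"
      unfolding eff_distinguishes_def distinguishes_def by blast
    have ne: "s (j i) \<noteq> inv_sep (s (j i))" using xy by auto
    obtain k where kk: "\<forall>x\<in>P (j i). is_sep V E x \<and> sep_order x < k"
      "\<forall>x. is_sep V E x \<and> sep_order x < k \<longrightarrow>
          (x \<in> P (j i) \<or> inv_sep x \<in> P (j i)) \<and> (x \<in> P (j i) \<and> inv_sep x \<in> P (j i) \<longrightarrow> x = inv_sep x)"
      using assms(4) unfolding pre_tangle_def by blast
    have "sep_order (inv_sep (s (j i))) < k" using kk(1) inv by blast
    hence "sep_order (s (j i)) < k" by (simp add: sep_order_inv)
    hence "is_sep V E (s (j i)) \<and> sep_order (s (j i)) < k" using assms(2) by simp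
    hence "s (j i) \<in> P (j i) \<and> inv_sep (s (j i)) \<in> P (j i) \<longrightarrow> s (j i) = inv_sep (s (j i))"
      using spec[OF kk(2), of "s (j i)"] by blast
    hence "s (j i) \<notin> P (j i)" using inv ne by blast
    hence "x = inv_sep (s (j i))" using xy by auto
    thus "s (j i) \<in> P (j (Suc i))" using xy by auto
  qed
  show ?thesis using smj so IM1j IM2j by blast
qed

end
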